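(* Let $\Delta\subset\Delta'$ be (not necessarily lattice) $d$-simplices in $\mathbb{R}^d$ having the origin $O$ as a common vertex and spanning the same cone at $O$. Then for every real $\epsilon$ with $0<\epsilon<1$ and every real $c\ge\sqrt d/\epsilon$ one has $$(c-\epsilon c)\Delta'\subset \mathrm{UC}_\Delta(c\Delta').$$
   Context: For affinely independent $v_0,\dots,v_e$, the affine lattice they define is $v_0+\sum_{i=1}^e\mathbb{Z}(v_i-v_0)$; for a simplex $\Delta=\mathrm{conv}(w_0,\dots,w_e)$ set $\mathcal{L}_\Delta=w_0+\sum_{i=1}^e\mathbb{Z}(w_i-w_0)$ (independent of the ordering of vertices). For an affine lattice $\mathcal L$, a simplex $\Sigma$ is $\mathcal L$-unimodular if $\mathcal L_\Sigma=\mathcal L$. For a polytope $P$, $\mathrm{UC}_{\mathcal L}(P)$ is the union of all $\mathcal L$-unimodular simplices contained in $P$, and $\mathrm{UC}_\Delta(P)=\mathrm{UC}_{\mathcal L_\Delta}(P)$. $cP$ denotes dilatation by $c$ with center $O$. *)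

theory Defs
  imports "HOL-Analysis.Analysis"
begin

text \<open>For affinely independent C and v0 in C this is
  the affine lattice v0 + sum_i Z (v_i - v0) of the paper (the term v = v0 vanishes).\<close>
definition aff_lattice_at :: "'a::real_vector \<Rightarrow> 'a set \<Rightarrow> 'a set" where
  "aff_lattice_at v0 C =
     {v0 + (\<Sum>v\<in>C. c v *\<^sub>R (v - v0)) | c. \<forall>v\<in>C. c v \<in> \<int>}"

text \<open>The lattice L_Delta of the simplex with vertex set C (independent of the choice
  of the base vertex, as noted in the paper).\<close>
definition simplex_lattice :: "'a::real_vector set \<Rightarrow> 'a set" where
  "simplex_lattice C = aff_lattice_at (SOME v0. v0 \<in> C) C"

definition UC :: "'a::real_vector set \<Rightarrow> 'a set \<Rightarrow> 'a set" where
  "UC L P = \<Union> {convex hull C | C. C \<noteq> {} \<and> finite C \<and> \<not> affine_dependent C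
                 \<and> convex hull C \<subseteq> P \<and> simplex_lattice C = L}"

end

theory Submission
  imports Defs
begin


definition grp :: "'a::real_vector set \<Rightarrow> bool" where
  "grp S \<longleftrightarrow> 0 \<in> S \<and> (\<forall>a\<in>S. \<forall>b\<in>S. a + b \<in> S) \<and> (\<forall>a\<in>S. - a \<in> S)"

definition Gen :: "'b set \<Rightarrow> ('b \<Rightarrow> 'a::real_vector) \<Rightarrow> 'a set" where
  "Gen I \<phi> = {(\<Sum>i\<in>I. c i *\<^sub>R \<phi> i) | c. \<forall>i\<in>I. c i \<in> \<int>}"

lemma grp_diff: "grp S \<Longrightarrow> a \<in> S \<Longrightarrow> b \<in> S \<Longrightarrow> a - b \<in> S"
  unfolding grp_def by (metis diff_conv_add_uminus)

lemma grp_nat_scale: assumes "grp S" "a \<in> S" shows "real k *\<^sub>R a \<in> S"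
proof (induction k)
  case 0 then show ?case using assms by (simp add: grp_def)
next
  case (Suc k)
  have "real (Suc k) *\<^sub>R a = real k *\<^sub>R a + a" by (simp add: algebra_simps)
  then show ?case using Suc assms by (simp add: grp_def)
qed

lemma grp_int_scale: assumes "grp S" "a \<in> S" "r \<in> \<int>" shows "r *\<^sub>R a \<in> S"
proof -
  obtain m where m: "r = of_int m" using assms(3) Ints_cases by blast
  show ?thesis
  proof (cases "m \<ge> 0")
    case True
    then have "r = real (nat m)" using m by simp
    then show ?thesis using grp_nat_scale[OF assms(1,2)] by simp
  next
    case False
    then have "r = - real (nat (- m))" using m by simp
    then have "r *\<^sub>R a = - (real (nat (- m)) *\<^sub>R a)" by simp
    then show ?thesis using grp_nat_scale[OF assms(1,2)] assms(1) by (simp add: grp_def)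
  qed
qed

lemma grp_sum: assumes "grp S" "\<And>i. i \<in> I \<Longrightarrow> f i \<in> S" shows "sum f I \<in> S"
  using assms(2)
proof (induction I rule: infinite_finite_induct)
  case (infinite A) then show ?case using assms(1) by (simp add: grp_def)
next
  case empty then show ?case using assms(1) by (simp add: grp_def)
next
  case (insert x F) then show ?case using assms(1) by (simp add: grp_def)
qed

lemma grp_Gen: "grp (Gen I \<phi>)"
  unfolding grp_def
proof (intro conjI ballI)
  show "0 \<in> Gen I \<phi>" unfolding Gen_def by (rule CollectI, rule exI[of _ "\<lambda>_. 0"]) simp
next
  fix a b assume "a \<in> Gen I \<phi>" "b \<in> Gen I \<phi>"
  then obtain c c' where c: "a = (\<Sum>i\<in>I. c i *\<^sub>R \<phi> i)" "\<forall>i\<in>I. c i \<in> \<int>"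
     and c': "b = (\<Sum>i\<in>I. c' i *\<^sub>R \<phi> i)" "\<forall>i\<in>I. c' i \<in> \<int>" unfolding Gen_def by blast
  have "a + b = (\<Sum>i\<in>I. (c i + c' i) *\<^sub>R \<phi> i)" using c c' by (simp add: sum.distrib scaleR_add_left)
  then show "a + b \<in> Gen I \<phi>" unfolding Gen_def using c(2) c'(2) by (auto intro!: exI[of _ "\<lambda>i. c i + c' i"])
next
  fix a assume "a \<in> Gen I \<phi>"
  then obtain c where c: "a = (\<Sum>i\<in>I. c i *\<^sub>R \<phi> i)" "\<forall>i\<in>I. c i \<in> \<int>" unfolding Gen_def by blast
  have "- a = (\<Sum>i\<in>I. (- c i) *\<^sub>R \<phi> i)" using c by (simp add: sum_negf)
  then show "- a \<in> Gen I \<phi>" unfolding Gen_def using c(2) by (auto intro!: exI[of _ "\<lambda>i. - c i"])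
qed

lemma Gen_mem: assumes "finite I" "j \<in> I" shows "\<phi> j \<in> Gen I \<phi>"
proof -
  have "(\<Sum>i\<in>I. (if i = j then 1 else 0) *\<^sub>R \<phi> i) = \<phi> j"
    using assms by (simp add: if_distrib[of "\<lambda>r. r *\<^sub>R _"] cong: if_cong)
  then show ?thesis unfolding Gen_def by (auto intro!: exI[of _ "\<lambda>i. if i = j then 1 else 0"])
qed

lemma Gen_min: assumes "grp S" "\<And>i. i \<in> I \<Longrightarrow> \<phi> i \<in> S" shows "Gen I \<phi> \<subseteq> S"
proof
  fix a assume "a \<in> Gen I \<phi>"
  then obtain c where c: "a = (\<Sum>i\<in>I. c i *\<^sub>R \<phi> i)" "\<forall>i\<in>I. c i \<in> \<int>" unfolding Gen_def by blast
  show "a \<in> S" unfolding c(1) by (rule grp_sum[OF assms(1)]) (use c(2) assms grp_int_scale in blast)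
qed

lemma aff_lattice_Gen: "aff_lattice_at v0 C = (\<lambda>g. v0 + g) ` Gen C (\<lambda>v. v - v0)"
  unfolding aff_lattice_at_def Gen_def by blast

lemma aff_lattice_eq:
  fixes u :: "nat \<Rightarrow> 'a::real_vector"
  assumes fin: "finite C" and v0: "v0 \<in> C" and sub: "C \<subseteq> Gen {..<n} u"
    and diffs: "\<And>k. k < n \<Longrightarrow> \<exists>a\<in>C. \<exists>b\<in>C. u k = a - b"
  shows "aff_lattice_at v0 C = Gen {..<n} u"
proof -
  let ?G = "Gen C (\<lambda>v. v - v0)"
  let ?L = "Gen {..<n} u"
  have GL: "?G \<subseteq> ?L"
    by (rule Gen_min[OF grp_Gen]) (use sub v0 grp_diff[OF grp_Gen] in blast)
  have uG: "u k \<in> ?G" if kn: "k < n" for k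
  proof -
    obtain a b where ab: "a \<in> C" "b \<in> C" "u k = a - b" using diffs[OF kn] by blast
    have "u k = (a - v0) - (b - v0)" using ab by simp
    then show ?thesis using grp_diff[OF grp_Gen] Gen_mem[OF fin ab(1)] Gen_mem[OF fin ab(2)] by metis
  qed
  have LG: "?L \<subseteq> ?G" by (rule Gen_min[OF grp_Gen]) (use uG in auto)
  show ?thesis
  proof
    show "aff_lattice_at v0 C \<subseteq> ?L"
      unfolding aff_lattice_Gen using GL sub v0 grp_Gen[of "{..<n}" u] by (auto simp: grp_def)
  next
    show "?L \<subseteq> aff_lattice_at v0 C"
    proof
      fix y assume y: "y \<in> ?L"
      have "- v0 \<in> ?L" using sub v0 grp_Gen[of "{..<n}" u] by (auto simp: grp_def)
      then have "y + - v0 \<in> ?G" using y LG grp_Gen[of C "\<lambda>v. v - v0"] unfolding grp_def by blast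
      then show "y \<in> aff_lattice_at v0 C" unfolding aff_lattice_Gen by (auto intro!: image_eqI[of _ _ "y + - v0"])
    qed
  qed
qed

lemma simplex_lattice_eq:
  fixes u :: "nat \<Rightarrow> 'a::real_vector"
  assumes fin: "finite C" and ne: "C \<noteq> {}" and sub: "C \<subseteq> Gen {..<n} u"
    and diffs: "\<And>k. k < n \<Longrightarrow> \<exists>a\<in>C. \<exists>b\<in>C. u k = a - b"
  shows "simplex_lattice C = Gen {..<n} u"
  unfolding simplex_lattice_def using aff_lattice_eq[OF fin _ sub diffs] ne some_in_eq by metis



definition kprec :: "(nat \<Rightarrow> real) \<Rightarrow> nat \<Rightarrow> nat \<Rightarrow> bool" where
  "kprec y k k' \<longleftrightarrow> frac (y k') < frac (y k) \<or> (frac (y k) = frac (y k') \<and> k < k')"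

definition krank :: "(nat \<Rightarrow> real) \<Rightarrow> nat \<Rightarrow> nat \<Rightarrow> nat" where
  "krank y n k = card {k'. k' < n \<and> kprec y k' k}"

definition kvert :: "(nat \<Rightarrow> 'a::real_vector) \<Rightarrow> (nat \<Rightarrow> real) \<Rightarrow> nat \<Rightarrow> nat \<Rightarrow> 'a" where
  "kvert u y n j = (\<Sum>k<n. (of_int \<lfloor>y k\<rfloor> + (if krank y n k < j then 1 else 0)) *\<^sub>R u k)"

lemma kprec_irrefl: "\<not> kprec y k k" unfolding kprec_def by auto
lemma kprec_trans: "kprec y a b \<Longrightarrow> kprec y b c \<Longrightarrow> kprec y a c" unfolding kprec_def by auto
lemma kprec_total: "a \<noteq> b \<Longrightarrow> kprec y a b \<or> kprec y b a" unfolding kprec_def by auto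

lemma krank_lt: assumes "k < n" shows "krank y n k < n"
proof -
  have "{k'. k' < n \<and> kprec y k' k} \<subseteq> {..<n} - {k}" using kprec_irrefl by auto
  then have "krank y n k \<le> card ({..<n} - {k})" unfolding krank_def by (intro card_mono) auto
  also have "\<dots> = n - 1" using assms by simp
  finally show ?thesis using assms by simp
qed

lemma krank_mono: assumes "k < n" "kprec y k k'" shows "krank y n k < krank y n k'"
  unfolding krank_def
proof (rule psubset_card_mono)
  show "{p. p < n \<and> kprec y p k} \<subset> {p. p < n \<and> kprec y p k'}"
    using assms kprec_trans kprec_irrefl by blast
qed auto

lemma krank_inj: "inj_on (krank y n) {..<n}"
proof (rule inj_onI)
  fix a b assume ab: "a \<in> {..<n}" "b \<in> {..<n}" "krank y n a = krank y n b"
  show "a = b"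
  proof (rule ccontr)
    assume "a \<noteq> b"
    then have "kprec y a b \<or> kprec y b a" by (rule kprec_total)
    then show False using krank_mono[of a n y b] krank_mono[of b n y a] ab by auto
  qed
qed

lemma krank_bij: "krank y n ` {..<n} = {..<n}"
  by (rule endo_inj_surj) (use krank_lt krank_inj in auto)

lemma krank_frac: assumes "k < n" "k' < n" "krank y n k < krank y n k'"
  shows "frac (y k') \<le> frac (y k)"
proof (rule ccontr)
  assume "\<not> ?thesis"
  then have "kprec y k' k" unfolding kprec_def by auto
  then show False using krank_mono[of k' n y k] assms by auto
qed

lemma kvert_diff: assumes "k < n"
  shows "kvert u y n (Suc (krank y n k)) - kvert u y n (krank y n k) = u k"
proof -
  have "kvert u y n (Suc (krank y n k)) - kvert u y n (krank y n k)
     = (\<Sum>k'<n. (if k' = k then 1 else 0) *\<^sub>R u k')"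
    unfolding kvert_def sum_subtractf[symmetric]
  proof (rule sum.cong[OF refl])
    fix k' assume k': "k' \<in> {..<n}"
    have "krank y n k' = krank y n k \<longleftrightarrow> k' = k" using krank_inj[of y n] k' assms
      by (auto dest: inj_onD)
    then show "(of_int \<lfloor>y k'\<rfloor> + (if krank y n k' < Suc (krank y n k) then 1 else 0)) *\<^sub>R u k' -
          (of_int \<lfloor>y k'\<rfloor> + (if krank y n k' < krank y n k then 1 else 0)) *\<^sub>R u k' =
          (if k' = k then 1 else 0) *\<^sub>R u k'"
      by (auto simp: algebra_simps)
  qed
  also have "\<dots> = u k" using assms by (simp add: if_distrib[of "\<lambda>r. r *\<^sub>R _"] cong: if_cong)
  finally show ?thesis .
qed

lemma kvert_hull: "(\<Sum>k<n. y k *\<^sub>R u k) \<in> convex hull (kvert u y n ` {..n})"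
proof -
  define \<pi> where "\<pi> = inv_into {..<n} (krank y n)"
  define S where "S j = (if j = 0 then 1 else if j \<le> n then frac (y (\<pi> (j - 1))) else 0)" for j
  define l where "l j = S j - S (Suc j)" for j
  have pi_in: "\<pi> j < n" if "j < n" for j
    unfolding \<pi>_def using krank_bij[of y n] that by (metis inv_into_into lessThan_iff)
  have rank_pi: "krank y n (\<pi> j) = j" if "j < n" for j
    unfolding \<pi>_def using krank_bij[of y n] that by (simp add: f_inv_into_f)
  have pi_rank: "\<pi> (krank y n k) = k" if "k < n" for k
    unfolding \<pi>_def using krank_inj[of y n] that by (simp add: inv_into_f_f)
  have l_nonneg: "0 \<le> l j" if jn: "j \<in> {..n}" for j
  proof -
    consider "j = 0" | "0 < j" "j < n" | "j = n" "0 < n" using jn by force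
    then show ?thesis
    proof cases
      case 1 then show ?thesis unfolding l_def S_def using frac_lt_1 by (auto intro: less_imp_le)
    next
      case 2
      have "frac (y (\<pi> j)) \<le> frac (y (\<pi> (j - 1)))"
        using krank_frac[of "\<pi> (j-1)" n "\<pi> j" y] pi_in rank_pi 2 by auto
      then show ?thesis unfolding l_def S_def using 2 by auto
    next
      case 3 then show ?thesis unfolding l_def S_def by auto
    qed
  qed
  have l_sum: "sum l {..n} = 1"
    unfolding l_def lessThan_Suc_atMost[symmetric] sum_lessThan_telescope' by (simp add: S_def)
  have coeff: "(\<Sum>j\<le>n. l j * (of_int \<lfloor>y k\<rfloor> + (if krank y n k < j then 1 else 0))) = y k"
    if k: "k < n" for k
  proof -
    have "(\<Sum>j\<le>n. l j * (of_int \<lfloor>y k\<rfloor> + (if krank y n k < j then 1 else 0)))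
        = of_int \<lfloor>y k\<rfloor> * sum l {..n} + (\<Sum>j\<le>n. if krank y n k < j then l j else 0)"
    proof -
      have "(\<Sum>j\<le>n. l j * (of_int \<lfloor>y k\<rfloor> + (if krank y n k < j then 1 else 0)))
          = (\<Sum>j\<le>n. l j * of_int \<lfloor>y k\<rfloor> + (if krank y n k < j then l j else 0))"
        by (rule sum.cong) (auto simp: algebra_simps)
      also have "\<dots> = of_int \<lfloor>y k\<rfloor> * sum l {..n} + (\<Sum>j\<le>n. if krank y n k < j then l j else 0)"
        by (simp add: sum.distrib sum_distrib_right mult.commute)
      finally show ?thesis .
    qed
    also have "(\<Sum>j\<le>n. if krank y n k < j then l j else 0) = (\<Sum>j\<in>{j\<in>{..n}. krank y n k < j}. l j)"
      by (rule sum.inter_filter[symmetric]) simp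
    also have "{j\<in>{..n}. krank y n k < j} = {Suc (krank y n k)..n}" by auto
    also have "(\<Sum>j\<in>{Suc (krank y n k)..n}. l j) = - (\<Sum>j\<in>{Suc (krank y n k)..n}. S (Suc j) - S j)"
      unfolding l_def by (simp add: sum_negf[symmetric])
    also have "\<dots> = S (Suc (krank y n k)) - S (Suc n)"
      using krank_lt[OF k, of y] by (subst sum_Suc_diff) auto
    also have "\<dots> = frac (y k)" unfolding S_def using krank_lt[OF k, of y] pi_rank[OF k] by auto
    finally show ?thesis using l_sum by (simp add: frac_def)
  qed
  have "(\<Sum>j\<le>n. l j *\<^sub>R kvert u y n j) = (\<Sum>k<n. y k *\<^sub>R u k)"
  proof -
    have "(\<Sum>j\<le>n. l j *\<^sub>R kvert u y n j)
       = (\<Sum>j\<le>n. \<Sum>k<n. (l j * (of_int \<lfloor>y k\<rfloor> + (if krank y n k < j then 1 else 0))) *\<^sub>R u k)"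
      unfolding kvert_def by (simp add: scaleR_sum_right)
    also have "\<dots> = (\<Sum>k<n. \<Sum>j\<le>n. (l j * (of_int \<lfloor>y k\<rfloor> + (if krank y n k < j then 1 else 0))) *\<^sub>R u k)"
      by (rule sum.swap)
    also have "\<dots> = (\<Sum>k<n. y k *\<^sub>R u k)"
      by (rule sum.cong[OF refl]) (simp add: scaleR_sum_left[symmetric] coeff)
    finally show ?thesis .
  qed
  moreover have "(\<Sum>j\<le>n. l j *\<^sub>R kvert u y n j) \<in> convex hull (kvert u y n ` {..n})"
    by (rule convex_sum) (use l_nonneg l_sum in \<open>auto intro: convex_convex_hull hull_inc\<close>)
  ultimately show ?thesis by simp
qed



lemma kcoeff_mono: assumes "k < k'" "y k' \<le> y k"
  shows "of_int \<lfloor>y k'\<rfloor> + (if krank y n k' < j then 1 else 0)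
       \<le> (of_int \<lfloor>y k\<rfloor> + (if krank y n k < j then 1 else 0) :: real)"
proof -
  have fl: "\<lfloor>y k'\<rfloor> \<le> \<lfloor>y k\<rfloor>" using assms(2) floor_mono by blast
  show ?thesis
  proof (cases "\<lfloor>y k'\<rfloor> = \<lfloor>y k\<rfloor>")
    case True
    then have "frac (y k') \<le> frac (y k)" using assms(2) by (simp add: frac_def)
    then have "kprec y k k'" using assms(1) unfolding kprec_def by auto
    show ?thesis
    proof (cases "k < n")
      case True
      then have "krank y n k < krank y n k'" using krank_mono \<open>kprec y k k'\<close> by blast
      then show ?thesis using \<open>\<lfloor>y k'\<rfloor> = \<lfloor>y k\<rfloor>\<close> by auto
    next
      case False
      then have "krank y n k \<le> krank y n k'" unfolding krank_def
        using \<open>kprec y k k'\<close> kprec_trans[of y _ k k'] by (intro card_mono) auto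
      then show ?thesis using \<open>\<lfloor>y k'\<rfloor> = \<lfloor>y k\<rfloor>\<close> by auto
    qed
  next
    case False
    then have "\<lfloor>y k'\<rfloor> + 1 \<le> \<lfloor>y k\<rfloor>" using fl by linarith
    then have "real_of_int \<lfloor>y k'\<rfloor> + 1 \<le> real_of_int \<lfloor>y k\<rfloor>" by linarith
    then show ?thesis by auto
  qed
qed

lemma abel:
  fixes \<beta> :: "nat \<Rightarrow> 'a::real_vector"
  shows "(\<Sum>k<n. Y k *\<^sub>R (\<beta> k - (if k = 0 then 0 else \<beta> (k - 1))))
       = (\<Sum>k<n. (Y k - (if Suc k < n then Y (Suc k) else 0)) *\<^sub>R \<beta> k)"
proof (induction n)
  case 0 then show ?case by simp
next
  case (Suc n)
  show ?case
  proof (cases n)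
    case 0 then show ?thesis by simp
  next
    case (Suc m)
    have A: "(\<Sum>k<Suc n. (Y k - (if Suc k < Suc n then Y (Suc k) else 0)) *\<^sub>R \<beta> k)
        = (\<Sum>k<n. (Y k - Y (Suc k)) *\<^sub>R \<beta> k) + Y n *\<^sub>R \<beta> n" by simp
    have B: "(\<Sum>k<n. (Y k - (if Suc k < n then Y (Suc k) else 0)) *\<^sub>R \<beta> k)
        = (\<Sum>k<n. (Y k - Y (Suc k)) *\<^sub>R \<beta> k) + Y n *\<^sub>R \<beta> m"
      using Suc by (simp add: algebra_simps)
    show ?thesis using Suc.IH A B Suc by (simp add: algebra_simps)
  qed
qed

lemma hull0_char:
  fixes S :: "'a::real_vector set"
  assumes "finite S" "0 \<notin> S"
  shows "convex hull (insert 0 S) = {\<Sum>s\<in>S. a s *\<^sub>R s | a. (\<forall>s\<in>S. 0 \<le> a s) \<and> sum a S \<le> 1}"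
proof
  show "convex hull (insert 0 S) \<subseteq> {\<Sum>s\<in>S. a s *\<^sub>R s | a. (\<forall>s\<in>S. 0 \<le> a s) \<and> sum a S \<le> 1}"
  proof
    fix y assume "y \<in> convex hull (insert 0 S)"
    then obtain u where u: "\<forall>x\<in>insert 0 S. 0 \<le> u x" "sum u (insert 0 S) = 1"
      "(\<Sum>x\<in>insert 0 S. u x *\<^sub>R x) = y" using convex_hull_finite[of "insert 0 S"] assms(1) by auto
    have "y = (\<Sum>s\<in>S. u s *\<^sub>R s)" using u(3) assms by (simp add: sum.insert)
    moreover have "sum u S \<le> 1" using u(1,2) assms by (simp add: sum.insert)
    ultimately show "y \<in> {\<Sum>s\<in>S. a s *\<^sub>R s | a. (\<forall>s\<in>S. 0 \<le> a s) \<and> sum a S \<le> 1}"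
      using u(1) by blast
  qed
next
  show "{\<Sum>s\<in>S. a s *\<^sub>R s | a. (\<forall>s\<in>S. 0 \<le> a s) \<and> sum a S \<le> 1} \<subseteq> convex hull (insert 0 S)"
  proof
    fix y assume "y \<in> {\<Sum>s\<in>S. a s *\<^sub>R s | a. (\<forall>s\<in>S. 0 \<le> a s) \<and> sum a S \<le> 1}"
    then obtain a where a: "\<forall>s\<in>S. 0 \<le> a s" "sum a S \<le> 1" "y = (\<Sum>s\<in>S. a s *\<^sub>R s)" by blast
    define u where "u x = (if x = 0 then 1 - sum a S else a x)" for x
    have uS: "sum u S = sum a S" unfolding u_def using assms(2) by (intro sum.cong) auto
    have uS2: "(\<Sum>x\<in>S. u x *\<^sub>R x) = (\<Sum>s\<in>S. a s *\<^sub>R s)" unfolding u_def using assms(2) by (intro sum.cong) auto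
    have "\<forall>x\<in>insert 0 S. 0 \<le> u x" using a unfolding u_def by auto
    moreover have "sum u (insert 0 S) = 1" using assms uS by (simp add: sum.insert u_def)
    moreover have "(\<Sum>x\<in>insert 0 S. u x *\<^sub>R x) = y" using assms uS2 a(3) by (simp add: sum.insert)
    ultimately show "y \<in> convex hull (insert 0 S)" using convex_hull_finite[of "insert 0 S"] assms(1) by auto
  qed
qed

lemma cone0_char:
  fixes S :: "'a::real_vector set"
  assumes "finite S" "0 \<notin> S"
  shows "cone hull (convex hull (insert 0 S)) = {\<Sum>s\<in>S. a s *\<^sub>R s | a. \<forall>s\<in>S. 0 \<le> a s}"
proof
  show "cone hull (convex hull (insert 0 S)) \<subseteq> {\<Sum>s\<in>S. a s *\<^sub>R s | a. \<forall>s\<in>S. 0 \<le> a s}"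
  proof
    fix y assume "y \<in> cone hull (convex hull (insert 0 S))"
    then obtain t x where tx: "0 \<le> t" "x \<in> convex hull (insert 0 S)" "y = t *\<^sub>R x"
      unfolding cone_hull_expl by blast
    then obtain a where a: "\<forall>s\<in>S. 0 \<le> a s" "x = (\<Sum>s\<in>S. a s *\<^sub>R s)"
      unfolding hull0_char[OF assms] by blast
    have "y = (\<Sum>s\<in>S. (t * a s) *\<^sub>R s)" using tx(3) a(2) by (simp add: scaleR_sum_right)
    moreover have "\<forall>s\<in>S. 0 \<le> t * a s" using a(1) tx(1) by simp
    ultimately show "y \<in> {\<Sum>s\<in>S. a s *\<^sub>R s | a. \<forall>s\<in>S. 0 \<le> a s}"
      by (intro CollectI exI[of _ "\<lambda>s. t * a s"]) auto
  qed
next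
  show "{\<Sum>s\<in>S. a s *\<^sub>R s | a. \<forall>s\<in>S. 0 \<le> a s} \<subseteq> cone hull (convex hull (insert 0 S))"
  proof
    fix y assume "y \<in> {\<Sum>s\<in>S. a s *\<^sub>R s | a. \<forall>s\<in>S. 0 \<le> a s}"
    then obtain a where a: "\<forall>s\<in>S. 0 \<le> a s" "y = (\<Sum>s\<in>S. a s *\<^sub>R s)" by blast
    define t where "t = sum a S + 1"
    have t: "t > 0" unfolding t_def using a(1) sum_nonneg[of S a] by auto
    have "(\<Sum>s\<in>S. (a s / t) *\<^sub>R s) \<in> convex hull (insert 0 S)"
      unfolding hull0_char[OF assms]
    proof (intro CollectI exI conjI)
      show "\<forall>s\<in>S. 0 \<le> a s / t" using a(1) t by auto
      show "(\<Sum>s\<in>S. a s / t) \<le> 1" using t unfolding sum_divide_distrib[symmetric] t_def by simp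
    qed (rule refl)
    moreover have "y = t *\<^sub>R (\<Sum>s\<in>S. (a s / t) *\<^sub>R s)" using a(2) t by (simp add: scaleR_sum_right)
    ultimately show "y \<in> cone hull (convex hull (insert 0 S))"
      unfolding cone_hull_expl using t by (auto intro!: exI[of _ t])
  qed
qed



theorem lemma2p2:
  fixes V W :: "'a::euclidean_space set" and \<epsilon> c :: real
  assumes "\<not> affine_dependent V" and "card V = DIM('a) + 1" and "0 \<in> V"
    and "\<not> affine_dependent W" and "card W = DIM('a) + 1" and "0 \<in> W"
    and "convex hull V \<subseteq> convex hull W"
    and "cone hull (convex hull V) = cone hull (convex hull W)"
    and "0 < \<epsilon>" and "\<epsilon> < 1" and "c \<ge> sqrt (real DIM('a)) / \<epsilon>"
  shows "(\<lambda>x. (c - \<epsilon> * c) *\<^sub>R x) ` (convex hull W)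
           \<subseteq> UC (simplex_lattice V) ((\<lambda>x. c *\<^sub>R x) ` (convex hull W))"
proof -
  note affV = assms(1) and cardV = assms(2) and V0 = assms(3)
  note affW = assms(4) and cardW = assms(5) and W0 = assms(6)
  note VW = assms(7) and coneEq = assms(8) and eps = assms(9,10) and cbound = assms(11)
  define d where "d = DIM('a)"
  have d1: "1 \<le> d" unfolding d_def using DIM_positive by (simp add: Suc_le_eq)
  define B where "B = V - {0}"
  define BW where "BW = W - {0}"
  have finV: "finite V" using cardV by (intro card_ge_0_finite) simp
  have finW: "finite W" using cardW by (intro card_ge_0_finite) simp
  have finB: "finite B" and finBW: "finite BW" using finV finW unfolding B_def BW_def by auto
  have VB: "V = insert 0 B" and WBW: "W = insert 0 BW" using V0 W0 unfolding B_def BW_def by auto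
  have B0: "0 \<notin> B" and BW0: "0 \<notin> BW" unfolding B_def BW_def by auto
  have cardB: "card B = d" using cardV V0 finV unfolding B_def d_def by simp
  have indB: "independent B"
    using affV affine_dependent_iff_dependent[OF B0] unfolding VB by simp
  have indBW: "independent BW"
    using affW affine_dependent_iff_dependent[OF BW0] unfolding WBW by simp
  obtain h :: "'a \<Rightarrow> real" where hlin: "linear h" and h1: "\<forall>x\<in>BW. h x = 1"
    using linear_independent_extend[OF indBW, of "\<lambda>_. 1"] by blast
  have hsum: "h (\<Sum>s\<in>S. a s *\<^sub>R s) = (\<Sum>s\<in>S. a s * h s)" for S and a :: "'a \<Rightarrow> real"
    using hlin by (simp add: linear_sum linear_scale)
  have hsumI: "h (\<Sum>k\<in>I. a k *\<^sub>R v k) = (\<Sum>k\<in>I. a k * h (v k))"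
    for I :: "nat set" and a :: "nat \<Rightarrow> real" and v :: "nat \<Rightarrow> 'a"
    using hlin by (simp add: linear_sum linear_scale)
  have hsumW: "h (\<Sum>s\<in>BW. a s *\<^sub>R s) = sum a BW" for a
    unfolding hsum using h1 by simp
  note convW = hull0_char[OF finBW BW0, folded WBW]
  note coneW = cone0_char[OF finBW BW0, folded WBW]
  note coneV = cone0_char[OF finB B0, folded VB]
  have cpos: "0 < c"
  proof -
    have "0 < sqrt (real DIM('a)) / \<epsilon>" using eps by simp
    then show ?thesis using cbound by linarith
  qed
  have ec: "1 \<le> \<epsilon> * c"
  proof -
    have "sqrt (real DIM('a)) \<le> \<epsilon> * c" using cbound eps by (simp add: pos_divide_le_eq mult.commute)
    moreover have "1 \<le> sqrt (real DIM('a))" using d1 unfolding d_def by simp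
    ultimately show ?thesis by linarith
  qed
  have F1: "p \<in> (\<lambda>x. c *\<^sub>R x) ` (convex hull W)"
    if p: "p \<in> cone hull (convex hull W)" "h p \<le> c" for p
  proof -
    obtain a where a: "\<forall>s\<in>BW. 0 \<le> a s" "p = (\<Sum>s\<in>BW. a s *\<^sub>R s)" using p(1) unfolding coneW by blast
    have "(\<Sum>s\<in>BW. (a s / c) *\<^sub>R s) \<in> convex hull W"
      unfolding convW
    proof (intro CollectI exI conjI)
      show "\<forall>s\<in>BW. 0 \<le> a s / c" using a(1) cpos by auto
      have "sum a BW \<le> c" using p(2) a(2) hsumW by simp
      then show "(\<Sum>s\<in>BW. a s / c) \<le> 1" using cpos unfolding sum_divide_distrib[symmetric] by simp
    qed (rule refl)
    moreover have "p = c *\<^sub>R (\<Sum>s\<in>BW. (a s / c) *\<^sub>R s)" using a(2) cpos by (simp add: scaleR_sum_right)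
    ultimately show ?thesis by (rule rev_image_eqI)
  qed
  have hconvW: "0 \<le> h w \<and> h w \<le> 1" if wW: "w \<in> convex hull W" for w
  proof -
    obtain a where a: "\<forall>s\<in>BW. 0 \<le> a s" "sum a BW \<le> 1" "w = (\<Sum>s\<in>BW. a s *\<^sub>R s)"
      using wW unfolding convW by blast
    have "h w = sum a BW" using a(3) hsumW by simp
    moreover have "0 \<le> sum a BW" using a(1) by (simp add: sum_nonneg)
    ultimately show ?thesis using a(2) by simp
  qed
  have hB: "0 \<le> h b \<and> h b \<le> 1" if "b \<in> B" for b
  proof -
    have "b \<in> V" using that unfolding VB by simp
    then have "b \<in> convex hull W" using VW hull_inc[of b V] by blast
    then show ?thesis by (rule hconvW)
  qed
  obtain xs where xs: "set xs = B" "distinct xs" using finite_distinct_list[OF finB] by blast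
  define ys where "ys = sort_key h xs"
  define \<beta> where "\<beta> k = ys ! k" for k
  have lys: "length ys = d" unfolding ys_def using xs cardB distinct_card by fastforce
  have dys: "distinct ys" and sys: "set ys = B" unfolding ys_def using xs by auto
  have sorted_h: "h (\<beta> i) \<le> h (\<beta> j)" if "i \<le> j" "j < d" for i j
    using sorted_sort_key[of h xs] that lys unfolding sorted_iff_nth_mono ys_def[symmetric] \<beta>_def
    by auto
  have \<beta>B: "\<beta> ` {..<d} = B" unfolding \<beta>_def using sys lys by (auto simp: set_conv_nth)
  have \<beta>inj: "inj_on \<beta> {..<d}" unfolding \<beta>_def using dys lys by (auto simp: inj_on_def nth_eq_iff_index_eq)
  have \<beta>in: "\<beta> k \<in> B" if "k < d" for k using \<beta>B that by auto
  define u where "u k = \<beta> k - (if k = 0 then 0 else \<beta> (k - 1))" for k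
  have hu: "0 \<le> h (u k)" if "k < d" for k
  proof (cases k)
    case 0 then show ?thesis using hB \<beta>in that by (simp add: u_def)
  next
    case (Suc m) then show ?thesis using sorted_h[of m k] that hlin by (simp add: u_def linear_diff)
  qed
  have tele: "(\<Sum>k\<le>K. u k) = \<beta> K" for K
    by (induction K) (simp_all add: u_def)
  define L0 where "L0 = Gen {..<d} u"
  have uL0: "u k \<in> L0" if "k < d" for k unfolding L0_def by (rule Gen_mem) (use that in auto)
  have \<beta>L0: "\<beta> k \<in> L0" if "k < d" for k
    using that
  proof (induction k)
    case 0 then show ?case using uL0[of 0] by (simp add: u_def)
  next
    case (Suc k)
    have "\<beta> (Suc k) = u (Suc k) + \<beta> k" by (simp add: u_def)
    then show ?case using Suc uL0[of "Suc k"] grp_Gen[of "{..<d}" u] unfolding L0_def grp_def by auto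
  qed
  have latV: "simplex_lattice V = L0"
    unfolding L0_def
  proof (rule simplex_lattice_eq)
    show "V \<subseteq> Gen {..<d} u" using \<beta>L0 \<beta>B grp_Gen[of "{..<d}" u] unfolding VB L0_def grp_def by auto
    fix k assume k: "k < d"
    show "\<exists>a\<in>V. \<exists>b\<in>V. u k = a - b"
    proof (cases "k = 0")
      case True
      then show ?thesis using \<beta>in[OF k] unfolding VB u_def by (intro bexI[of _ "\<beta> k"] bexI[of _ 0]) auto
    next
      case False
      then show ?thesis using \<beta>in[OF k] \<beta>in[of "k - 1"] k unfolding VB u_def
        by (intro bexI[of _ "\<beta> k"] bexI[of _ "\<beta> (k - 1)"]) auto
    qed
  qed (use finV V0 in auto)
  have spanB: "span B = UNIV"
    using card_ge_dim_independent[of B UNIV] indB cardB unfolding d_def by auto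
  have cone\<beta>: "(\<Sum>k<d. g k *\<^sub>R \<beta> k) \<in> cone hull (convex hull W)"
    if g: "\<And>k. k < d \<Longrightarrow> 0 \<le> g k" for g
  proof -
    define G where "G b = g (inv_into {..<d} \<beta> b)" for b
    have "(\<Sum>b\<in>B. G b *\<^sub>R b) = (\<Sum>k<d. G (\<beta> k) *\<^sub>R \<beta> k)"
      unfolding \<beta>B[symmetric] by (rule sum.reindex[OF \<beta>inj, unfolded comp_def])
    also have "\<dots> = (\<Sum>k<d. g k *\<^sub>R \<beta> k)" unfolding G_def using \<beta>inj by (simp add: inv_into_f_f)
    finally have eq: "(\<Sum>k<d. g k *\<^sub>R \<beta> k) = (\<Sum>b\<in>B. G b *\<^sub>R b)" by simp
    have "\<forall>b\<in>B. 0 \<le> G b" unfolding G_def using g \<beta>B by (metis inv_into_into lessThan_iff)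
    then have "(\<Sum>b\<in>B. G b *\<^sub>R b) \<in> cone hull (convex hull V)" unfolding coneV by blast
    then show ?thesis using eq coneEq by simp
  qed
  show ?thesis
  proof
    fix x assume "x \<in> (\<lambda>x. (c - \<epsilon> * c) *\<^sub>R x) ` (convex hull W)"
    then obtain w where w: "w \<in> convex hull W" "x = (c - \<epsilon> * c) *\<^sub>R w" by blast
    have cec: "0 \<le> c - \<epsilon> * c" using eps cpos by (simp add: mult_le_cancel_right1 less_imp_le)
    have hx: "h x \<le> c - 1"
    proof -
      have "h x = (c - \<epsilon> * c) * h w" using w(2) hlin by (simp add: linear_scale)
      also have "\<dots> \<le> (c - \<epsilon> * c)" using hconvW[OF w(1)] cec by (simp add: mult_left_le)
      finally show ?thesis using ec by linarith
    qed
    have "x \<in> cone hull (convex hull V)"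
    proof -
      have "w \<in> cone hull (convex hull W)" using w(1) by (rule hull_inc)
      moreover have "cone (cone hull (convex hull W))" by (rule cone_cone_hull)
      ultimately have "(c - \<epsilon> * c) *\<^sub>R w \<in> cone hull (convex hull W)"
        using cec unfolding cone_def by blast
      then show ?thesis using w(2) coneEq by simp
    qed
    then have "x \<in> {\<Sum>s\<in>B. a s *\<^sub>R s | a. \<forall>s\<in>B. 0 \<le> a s}" by (simp only: coneV)
    then obtain a where a: "\<forall>b\<in>B. 0 \<le> a b" "x = (\<Sum>b\<in>B. a b *\<^sub>R b)" by blast
    define A where "A k = a (\<beta> k)" for k
    have A0: "0 \<le> A k" if "k < d" for k using a(1) \<beta>in[OF that] unfolding A_def by auto
    have xA: "x = (\<Sum>k<d. A k *\<^sub>R \<beta> k)"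
      unfolding a(2) A_def \<beta>B[symmetric] by (rule sum.reindex[OF \<beta>inj, unfolded comp_def])
    define y where "y k = (\<Sum>j\<in>{k..<d}. A j)" for k
    have ySuc: "y k = A k + y (Suc k)" if "k < d" for k
      unfolding y_def using that by (simp add: sum.atLeast_Suc_lessThan)
    have y0: "0 \<le> y k" for k unfolding y_def using A0 by (auto intro: sum_nonneg)
    have ydiff: "y k - (if Suc k < d then y (Suc k) else 0) = A k" if "k < d" for k
      using ySuc[OF that] that by (auto simp: y_def)
    have xy: "x = (\<Sum>k<d. y k *\<^sub>R u k)"
      unfolding u_def abel xA by (rule sum.cong) (auto simp: ydiff)
    have hxy: "h x = (\<Sum>k<d. y k * h (u k))" unfolding xy by (rule hsumI)
    define q where "q j = kvert u y d j" for j
    define C where "C = q ` {..d}"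
    define m where "m j k = of_int \<lfloor>y k\<rfloor> + (if krank y d k < j then 1 else (0::real))" for j k
    have qm: "q j = (\<Sum>k<d. m j k *\<^sub>R u k)" for j unfolding q_def kvert_def m_def ..
    have xC: "x \<in> convex hull C" unfolding C_def q_def xy by (rule kvert_hull)
    have qL0: "q j \<in> L0" for j
      unfolding qm L0_def Gen_def m_def by (intro CollectI exI[of _ "m j"]) (auto simp: m_def)
    have qP: "q j \<in> (\<lambda>x. c *\<^sub>R x) ` (convex hull W)" for j
    proof (rule F1)
      have "q j = (\<Sum>k<d. (m j k - (if Suc k < d then m j (Suc k) else 0)) *\<^sub>R \<beta> k)"
        unfolding qm u_def abel ..
      also have "\<dots> \<in> cone hull (convex hull W)"
      proof (rule cone\<beta>)
        fix k assume k: "k < d"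
        show "0 \<le> m j k - (if Suc k < d then m j (Suc k) else 0)"
        proof (cases "Suc k < d")
          case True
          have "y (Suc k) \<le> y k" using ySuc[OF k] A0[OF k] by simp
          then show ?thesis using True kcoeff_mono[of k "Suc k" y d j] unfolding m_def by simp
        next
          case False
          have "0 \<le> \<lfloor>y k\<rfloor>" using y0[of k] by simp
          then show ?thesis using False unfolding m_def by simp
        qed
      qed
      finally show "q j \<in> cone hull (convex hull W)" .
      have "h (q j) = (\<Sum>k<d. m j k * h (u k))" unfolding qm by (rule hsumI)
      also have "\<dots> \<le> (\<Sum>k<d. (y k + 1) * h (u k))"
      proof (rule sum_mono)
        fix k assume k: "k \<in> {..<d}"
        have "real_of_int \<lfloor>y k\<rfloor> \<le> y k" by (rule of_int_floor_le)
        moreover have "m j k \<le> real_of_int \<lfloor>y k\<rfloor> + 1" unfolding m_def by auto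
        ultimately have "m j k \<le> y k + 1" by linarith
        then show "m j k * h (u k) \<le> (y k + 1) * h (u k)" using hu k by (simp add: mult_right_mono)
      qed
      also have "\<dots> = h x + h (\<Sum>k<d. u k)" unfolding hxy using hlin
        by (simp add: algebra_simps sum.distrib linear_sum)
      also have "(\<Sum>k<d. u k) = \<beta> (d - 1)" using tele[of "d - 1"] d1
        by (metis Suc_diff_1 lessThan_Suc_atMost less_le_trans zero_less_one)
      also have "h (\<beta> (d - 1)) \<le> 1" using hB \<beta>in d1 by simp
      finally show "h (q j) \<le> c" using hx by linarith
    qed
    have CP: "convex hull C \<subseteq> (\<lambda>x. c *\<^sub>R x) ` (convex hull W)"
      by (rule hull_minimal) (use qP in \<open>auto simp: C_def intro: convex_scaling convex_convex_hull\<close>)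
    have finC: "finite C" and neC: "C \<noteq> {}" unfolding C_def by auto
    have uC: "\<exists>a\<in>C. \<exists>b\<in>C. u k = a - b" if k: "k < d" for k
      using kvert_diff[OF k, of u y] krank_lt[OF k, of y] unfolding C_def q_def
      by (metis atMost_iff image_eqI less_imp_le_nat Suc_leI)
    have latC: "simplex_lattice C = L0" unfolding L0_def
      by (rule simplex_lattice_eq[OF finC neC]) (use qL0 uC in \<open>auto simp: C_def L0_def\<close>)
    have indC: "\<not> affine_dependent C"
    proof -
      define D where "D = (+) (- q 0) ` (C - {q 0})"
      have Cins: "C = insert (q 0) (C - {q 0})" unfolding C_def by auto
      have "C - {q 0} \<subseteq> q ` {1..d}" 
      proof
        fix z assume z: "z \<in> C - {q 0}"
        then obtain j where j: "j \<le> d" "z = q j" unfolding C_def by auto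
        have "j \<noteq> 0" using z j by (metis DiffD2 singletonI)
        then show "z \<in> q ` {1..d}" using j by auto
      qed
      then have "card (C - {q 0}) \<le> d"
        by (metis card_atLeastAtMost card_image_le finite_atLeastAtMost diff_Suc_1 order_trans surj_card_le)
      then have cardD: "card D \<le> d" unfolding D_def using card_image_le[of "C - {q 0}"] finC
        by (meson finite_Diff le_trans)
      have qD: "- q 0 + q j \<in> span D" if "j \<le> d" for j
      proof (cases "q j = q 0")
        case True then show ?thesis by (simp add: span_zero)
      next
        case False then have "- q 0 + q j \<in> D" unfolding D_def C_def using that by auto
        then show ?thesis by (rule span_base)
      qed
      have uD: "u k \<in> span D" if k: "k < d" for k
      proof -
        have "u k = (- q 0 + q (Suc (krank y d k))) - (- q 0 + q (krank y d k))"
          using kvert_diff[OF k, of u y] unfolding q_def by simp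
        then show ?thesis using qD[of "Suc (krank y d k)"] qD[of "krank y d k"] krank_lt[OF k, of y]
          by (metis Suc_leI less_imp_le_nat span_diff)
      qed
      have "\<beta> k \<in> span D" if k: "k < d" for k
        unfolding tele[of k, symmetric] by (rule span_sum) (use uD k in auto)
      then have "B \<subseteq> span D" using \<beta>B by auto
      then have "span B \<subseteq> span D" using span_mono span_span by metis
      then have "\<not> dependent D"
        using card_le_dim_spanning[of D UNIV] spanB cardD finC unfolding D_def d_def by auto
      then show ?thesis
        using affine_dependent_iff_dependent[of "q 0" "C - {q 0}"] Cins unfolding D_def by auto
    qed
    show "x \<in> UC (simplex_lattice V) ((\<lambda>x. c *\<^sub>R x) ` (convex hull W))"
      unfolding UC_def latV using xC CP finC neC indC latC by blast
  qed
qed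


end
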